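(* Let $D$ be an infinite commutative unital integral domain. The graded pair $(R,S)$ is relatively free in the variety of graded pairs determined by $Id(M_2(D),sl_2(D))$. That is: $(R,S)$ satisfies every weak graded identity of $(M_2(D),sl_2(D))$, and for every graded pair $(A,L)$ satisfying all weak graded identities of $(M_2(D),sl_2(D))$ and every choice of elements $a_i\in L\cap A^{(0)}$, $b_i\in L\cap A^{(1)}$ ($i\ge1$), there is a unique homomorphism of graded unital algebras $\psi\colon R\to A$ with $\psi(Y_i)=a_i$, $\psi(Z_i)=b_i$ for all $i$, and it satisfies $\psi(S)\subseteq L$.
   Context: Let $Y=\{y_1,y_2,\dots\}$ and $Z=\{z_1,z_2,\dots\}$ be disjoint countable sets of variables, $X=Y\cup Z$, and let $D\langle X\rangle$ be the free unital associative $D$-algebra on $X$, $\mathbb{Z}_2$-graded by declaring the $y_i$ even and the $z_i$ odd (a monomial is even iff it contains an even number of letters from $Z$, counted with multiplicity). Let $L\langle X\rangle$ be the Lie subalgebra of $D\langle X\rangle$ (with bracket $[a,b]=ab-ba$) generated by $X$, with the induced grading $L\langle X\rangle^{(0)}\oplus L\langle X\rangle^{(1)}$. A graded pair $(A,L)$ consists of a $\mathbb{Z}_2$-graded associative unital $D$-algebra $A=A^{(0)}\oplus A^{(1)}$ and a Lie subalgebra $L$ of $A$ (under the commutator) with $L=(L\cap A^{(0)})\oplus(L\cap A^{(1)})$. A polynomial $f(y_1,\dots,y_k,z_1,\dots,z_m)\in D\langle X\rangle$ is a weak graded identity of $(A,L)$ if $f$ vanishes under every substitution of each $y_i$ by an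 element of $L\cap A^{(0)}$ and each $z_j$ by an element of $L\cap A^{(1)}$; $Id(A,L)$ denotes the set of all weak graded identities of $(A,L)$. $M_2(D)$ is graded with diagonal matrices even and off-diagonal matrices odd, and $sl_2(D)$ (traceless matrices) carries the induced grading. Let $\mathcal{A}=D[\alpha_i,\beta_i,\gamma_i\mid i\ge1]$ be the commutative polynomial ring and in $M_2(\mathcal A)$ put $Y_i=\begin{pmatrix}\alpha_i&0\\0&-\alpha_i\end{pmatrix}$, $Z_i=\begin{pmatrix}0&\beta_i\\ \gamma_i&0\end{pmatrix}$. Let $R$ be the unital associative subalgebra of $M_2(\mathcal A)$ generated by all $Y_i,Z_i$, and $S$ the Lie subalgebra (under the commutator) generated by them; $R=R_0\oplus R_1$ is graded with the $Y_i$ even and the $Z_i$ odd, and $S$ has the induced grading $S_i=S\cap R_i$. *)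

theory Defs
  imports "HOL-Library.Poly_Mapping"
begin

datatype 'r mat2 = Mat2 (m11: 'r) (m12: 'r) (m21: 'r) (m22: 'r)

instantiation mat2 :: (comm_ring_1) ring_1
begin
definition "0 = Mat2 0 0 0 0"
definition "1 = Mat2 1 0 0 1"
definition "A + B = Mat2 (m11 A + m11 B) (m12 A + m12 B) (m21 A + m21 B) (m22 A + m22 B)"
definition "A - B = Mat2 (m11 A - m11 B) (m12 A - m12 B) (m21 A - m21 B) (m22 A - m22 B)"
definition "- A = Mat2 (- m11 A) (- m12 A) (- m21 A) (- m22 A)"
definition "A * B = Mat2 (m11 A * m11 B + m12 A * m21 B) (m11 A * m12 B + m12 A * m22 B)
                         (m21 A * m11 B + m22 A * m21 B) (m21 A * m12 B + m22 A * m22 B)"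
instance
  by standard (auto simp: zero_mat2_def one_mat2_def plus_mat2_def minus_mat2_def
      uminus_mat2_def times_mat2_def algebra_simps intro: mat2.expand)
end

definition mat2_scale :: "'r::comm_ring_1 \<Rightarrow> 'r mat2 \<Rightarrow> 'r mat2" where
  "mat2_scale c A = Mat2 (c * m11 A) (c * m12 A) (c * m21 A) (c * m22 A)"

text \<open>The grading of M_2: diagonal matrices even, off-diagonal odd; sl_2 = traceless.\<close>
definition diag2 :: "'r::comm_ring_1 mat2 set" where
  "diag2 = {A. m12 A = 0 \<and> m21 A = 0}"
definition offdiag2 :: "'r::comm_ring_1 mat2 set" where
  "offdiag2 = {A. m11 A = 0 \<and> m22 A = 0}"
definition sl2 :: "'r::comm_ring_1 mat2 set" where
  "sl2 = {A. m11 A + m22 A = 0}"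

text \<open>Variables: Yv i (even, y_{i+1}) and Zv i (odd, z_{i+1}).
  A noncommutative polynomial is a finitely supported map from words to coefficients.\<close>
datatype xvar = Yv nat | Zv nat

type_synonym 'a ncpoly = "xvar list \<Rightarrow>\<^sub>0 'a"

definition nc_eval :: "('a \<Rightarrow> 'b \<Rightarrow> 'b) \<Rightarrow> (xvar \<Rightarrow> 'b::ring_1) \<Rightarrow> 'a::zero ncpoly \<Rightarrow> 'b" where
  "nc_eval smul \<sigma> f = (\<Sum>w\<in>Poly_Mapping.keys f. smul (Poly_Mapping.lookup f w) (prod_list (map \<sigma> w)))"

text \<open>Id(A,L): weak graded identities, given the even part L0 = L \<inter> A^(0) and odd part
  L1 = L \<inter> A^(1).\<close>
definition weak_ids :: "('a \<Rightarrow> 'b \<Rightarrow> 'b) \<Rightarrow> 'b::ring_1 set \<Rightarrow> 'b set \<Rightarrow> 'a::zero ncpoly set" where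
  "weak_ids smul L0 L1 = {f. \<forall>\<sigma>. (\<forall>i. \<sigma> (Yv i) \<in> L0) \<and> (\<forall>i. \<sigma> (Zv i) \<in> L1)
        \<longrightarrow> nc_eval smul \<sigma> f = 0}"

definition d_algebra :: "('a::comm_ring_1 \<Rightarrow> 'b::ring_1 \<Rightarrow> 'b) \<Rightarrow> bool" where
  "d_algebra smul \<longleftrightarrow>
     (\<forall>a b x. smul a (smul b x) = smul (a * b) x) \<and> (\<forall>x. smul 1 x = x) \<and>
     (\<forall>a b x. smul (a + b) x = smul a x + smul b x) \<and>
     (\<forall>a x y. smul a (x + y) = smul a x + smul a y) \<and>
     (\<forall>a x y. smul a (x * y) = smul a x * y) \<and>
     (\<forall>a x y. smul a (x * y) = x * smul a y)"

definition d_submodule :: "('a \<Rightarrow> 'b \<Rightarrow> 'b) \<Rightarrow> 'b::ring_1 set \<Rightarrow> bool" where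
  "d_submodule smul M \<longleftrightarrow> 0 \<in> M \<and> (\<forall>x\<in>M. \<forall>y\<in>M. x + y \<in> M) \<and> (\<forall>a. \<forall>x\<in>M. smul a x \<in> M)"

text \<open>A Z_2-graded unital associative D-algebra A = A0 \<oplus> A1 (carrier: the whole type).\<close>
definition graded_algebra :: "('a::comm_ring_1 \<Rightarrow> 'b::ring_1 \<Rightarrow> 'b) \<Rightarrow> 'b set \<Rightarrow> 'b set \<Rightarrow> bool" where
  "graded_algebra smul A0 A1 \<longleftrightarrow> d_algebra smul \<and> d_submodule smul A0 \<and> d_submodule smul A1 \<and>
     (\<forall>x. \<exists>x0\<in>A0. \<exists>x1\<in>A1. x = x0 + x1) \<and> A0 \<inter> A1 = {0} \<and>
     (\<forall>x\<in>A0. \<forall>y\<in>A0. x * y \<in> A0) \<and> (\<forall>x\<in>A0. \<forall>y\<in>A1. x * y \<in> A1) \<and>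
     (\<forall>x\<in>A1. \<forall>y\<in>A0. x * y \<in> A1) \<and> (\<forall>x\<in>A1. \<forall>y\<in>A1. x * y \<in> A0)"

definition graded_pair :: "('a::comm_ring_1 \<Rightarrow> 'b::ring_1 \<Rightarrow> 'b) \<Rightarrow> 'b set \<Rightarrow> 'b set \<Rightarrow> 'b set \<Rightarrow> bool" where
  "graded_pair smul A0 A1 L \<longleftrightarrow> graded_algebra smul A0 A1 \<and> d_submodule smul L \<and>
     (\<forall>x\<in>L. \<forall>y\<in>L. x * y - y * x \<in> L) \<and>
     (\<forall>x\<in>L. \<exists>x0\<in>L \<inter> A0. \<exists>x1\<in>L \<inter> A1. x = x0 + x1)"

text \<open>Commuting variables alpha_i, beta_i, gamma_i of the polynomial ring \<A> = D[alpha,beta,gamma].\<close>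
datatype cvar = Alpha nat | Beta nat | Gamma nat

type_synonym 'a cpoly = "(cvar \<Rightarrow>\<^sub>0 nat) \<Rightarrow>\<^sub>0 'a"

definition pvar :: "cvar \<Rightarrow> 'a::comm_ring_1 cpoly" where
  "pvar v = Poly_Mapping.single (Poly_Mapping.single v 1) 1"

definition pconst :: "'a::comm_ring_1 \<Rightarrow> 'a cpoly" where
  "pconst c = Poly_Mapping.single 0 c"

definition genY :: "nat \<Rightarrow> 'a::comm_ring_1 cpoly mat2" where
  "genY i = Mat2 (pvar (Alpha i)) 0 0 (- pvar (Alpha i))"

definition genZ :: "nat \<Rightarrow> 'a::comm_ring_1 cpoly mat2" where
  "genZ i = Mat2 0 (pvar (Beta i)) (pvar (Gamma i)) 0"

definition Rsmul :: "'a::comm_ring_1 \<Rightarrow> 'a cpoly mat2 \<Rightarrow> 'a cpoly mat2" where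
  "Rsmul c A = mat2_scale (pconst c) A"

inductive_set genR :: "'a::comm_ring_1 cpoly mat2 set" where
  one: "1 \<in> genR"
| Y: "genY i \<in> genR"
| Z: "genZ i \<in> genR"
| add: "x \<in> genR \<Longrightarrow> y \<in> genR \<Longrightarrow> x + y \<in> genR"
| mult: "x \<in> genR \<Longrightarrow> y \<in> genR \<Longrightarrow> x * y \<in> genR"
| smul: "x \<in> genR \<Longrightarrow> Rsmul c x \<in> genR"

inductive_set genS :: "'a::comm_ring_1 cpoly mat2 set" where
  Y: "genY i \<in> genS"
| Z: "genZ i \<in> genS"
| add: "x \<in> genS \<Longrightarrow> y \<in> genS \<Longrightarrow> x + y \<in> genS"
| bracket: "x \<in> genS \<Longrightarrow> y \<in> genS \<Longrightarrow> x * y - y * x \<in> genS"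
| smul: "x \<in> genS \<Longrightarrow> Rsmul c x \<in> genS"

definition genR0 :: "'a::comm_ring_1 cpoly mat2 set" where "genR0 = genR \<inter> diag2"
definition genR1 :: "'a::comm_ring_1 cpoly mat2 set" where "genR1 = genR \<inter> offdiag2"

definition graded_hom_R :: "('a::comm_ring_1 \<Rightarrow> 'b::ring_1 \<Rightarrow> 'b) \<Rightarrow> 'b set \<Rightarrow> 'b set
    \<Rightarrow> ('a cpoly mat2 \<Rightarrow> 'b) \<Rightarrow> bool" where
  "graded_hom_R smul A0 A1 \<psi> \<longleftrightarrow>
     (\<forall>x\<in>genR. \<forall>y\<in>genR. \<psi> (x + y) = \<psi> x + \<psi> y) \<and>
     (\<forall>x\<in>genR. \<forall>y\<in>genR. \<psi> (x * y) = \<psi> x * \<psi> y) \<and>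
     (\<forall>c. \<forall>x\<in>genR. \<psi> (Rsmul c x) = smul c (\<psi> x)) \<and>
     \<psi> 1 = 1 \<and> \<psi> ` genR0 \<subseteq> A0 \<and> \<psi> ` genR1 \<subseteq> A1"

end

theory Submission
  imports Defs "HOL-Computational_Algebra.Polynomial"
begin


definition mmono :: "('v \<Rightarrow> 'a::comm_ring_1) \<Rightarrow> ('v \<Rightarrow>\<^sub>0 nat) \<Rightarrow> 'a" where
  "mmono x m = (\<Prod>u\<in>Poly_Mapping.keys m. x u ^ Poly_Mapping.lookup m u)"

definition peval :: "('v \<Rightarrow> 'a::comm_ring_1) \<Rightarrow> (('v \<Rightarrow>\<^sub>0 nat) \<Rightarrow>\<^sub>0 'a) \<Rightarrow> 'a" where
  "peval x p = (\<Sum>m\<in>Poly_Mapping.keys p. Poly_Mapping.lookup p m * mmono x m)"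

lemma mono_superset:
  assumes "finite W" "Poly_Mapping.keys m \<subseteq> W"
  shows "mmono x m = (\<Prod>u\<in>W. x u ^ Poly_Mapping.lookup m u)"
  unfolding mmono_def
  by (rule prod.mono_neutral_left) (use assms in \<open>auto simp: in_keys_iff\<close>)

lemma mono_add: "mmono x (m + n) = mmono x m * mmono x n"
proof -
  let ?W = "Poly_Mapping.keys m \<union> Poly_Mapping.keys n"
  have "mmono x (m+n) = (\<Prod>u\<in>?W. x u ^ Poly_Mapping.lookup (m+n) u)"
    by (rule mono_superset) (auto dest: subsetD[OF keys_add])
  also have "\<dots> = (\<Prod>u\<in>?W. x u ^ Poly_Mapping.lookup m u) * (\<Prod>u\<in>?W. x u ^ Poly_Mapping.lookup n u)"
    by (simp add: lookup_add power_add prod.distrib)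
  also have "\<dots> = mmono x m * mmono x n"
  proof -
    have "mmono x m = (\<Prod>u\<in>?W. x u ^ Poly_Mapping.lookup m u)" by (rule mono_superset) auto
    moreover have "mmono x n = (\<Prod>u\<in>?W. x u ^ Poly_Mapping.lookup n u)" by (rule mono_superset) auto
    ultimately show ?thesis by simp
  qed
  finally show ?thesis .
qed

lemma mono_zero [simp]: "mmono x 0 = 1"
  by (simp add: mmono_def)


lemma peval_superset:
  assumes "finite K" "Poly_Mapping.keys p \<subseteq> K"
  shows "peval x p = (\<Sum>m\<in>K. Poly_Mapping.lookup p m * mmono x m)"
  unfolding peval_def
  by (rule sum.mono_neutral_left) (use assms in \<open>auto simp: in_keys_iff\<close>)

lemma peval_add: "peval x (p + q) = peval x p + peval x q"
proof -
  let ?K = "Poly_Mapping.keys p \<union> Poly_Mapping.keys q"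
  have "peval x (p+q) = (\<Sum>m\<in>?K. Poly_Mapping.lookup (p+q) m * mmono x m)"
    by (rule peval_superset) (auto dest: subsetD[OF keys_add])
  also have "\<dots> = peval x p + peval x q"
    by (simp add: lookup_add distrib_right sum.distrib peval_superset[of ?K])
  finally show ?thesis .
qed

lemma peval_zero [simp]: "peval x 0 = 0"
  by (simp add: peval_def)

lemma peval_single [simp]: "peval x (Poly_Mapping.single m c) = c * mmono x m"
  by (simp add: peval_def)

lemma peval_sum: "peval x (sum f I) = (\<Sum>i\<in>I. peval x (f i))"
  by (induction I rule: infinite_finite_induct) (auto simp: peval_add)

lemma pm_repr: "p = (\<Sum>m\<in>Poly_Mapping.keys p. Poly_Mapping.single m (Poly_Mapping.lookup p m))"
proof (rule poly_mapping_eqI)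
  fix k
  show "Poly_Mapping.lookup p k = Poly_Mapping.lookup (\<Sum>m\<in>Poly_Mapping.keys p. Poly_Mapping.single m (Poly_Mapping.lookup p m)) k"
    by (cases "k \<in> Poly_Mapping.keys p") (auto simp: lookup_sum lookup_single when_def in_keys_iff)
qed

lemma peval_mult: "peval x (p * q) = peval x p * peval x q"
proof -
  have "p * q = (\<Sum>m\<in>Poly_Mapping.keys p. \<Sum>n\<in>Poly_Mapping.keys q.
      Poly_Mapping.single (m+n) (Poly_Mapping.lookup p m * Poly_Mapping.lookup q n))"
    apply (subst pm_repr[of p], subst pm_repr[of q])
    by (simp add: sum_distrib_left sum_distrib_right mult_single sum.swap[of _ "Poly_Mapping.keys q"])
  then have "peval x (p*q) = (\<Sum>m\<in>Poly_Mapping.keys p. \<Sum>n\<in>Poly_Mapping.keys q.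
      (Poly_Mapping.lookup p m * mmono x m) * (Poly_Mapping.lookup q n * mmono x n))"
    by (simp add: peval_sum mono_add algebra_simps)
  also have "\<dots> = peval x p * peval x q"
    by (simp add: peval_def sum_product)
  finally show ?thesis .
qed

lemma peval_one [simp]: "peval x 1 = 1"
  by (metis single_one peval_single mono_zero mult_1)

lemma peval_uminus: "peval x (- p) = - peval x p"
  by (metis add_eq_0_iff2 peval_add peval_zero add.right_inverse)

lemma peval_diff: "peval x (p - q) = peval x p - peval x q"
  by (metis diff_conv_add_uminus peval_add peval_uminus)

lemma peval_pvar [simp]: "peval x (pvar v) = x v"
  by (simp add: pvar_def mmono_def)

lemma peval_pconst [simp]: "peval x (pconst c) = c"
  by (simp add: pconst_def)




lemma key_vanish:
  fixes c :: "('v \<Rightarrow> nat) \<Rightarrow> 'a::idom"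
  assumes inf: "infinite (UNIV::'a set)" and fV: "finite V"
  shows "finite M \<Longrightarrow> (\<forall>x. (\<Sum>e\<in>M. c e * (\<Prod>u\<in>V. x u ^ e u)) = 0) \<Longrightarrow> e0 \<in> M
    \<Longrightarrow> (\<Sum>e\<in>{e\<in>M. \<forall>u\<in>V. e u = e0 u}. c e) = 0"
  using fV
proof (induction V arbitrary: M e0 rule: finite_induct)
  case empty
  then show ?case using empty.prems(2) by simp
next
  case (insert v V)
  note fM = insert.prems(1)
  define K where "K = (\<lambda>e. e v) ` M"
  have fK: "finite K" using fM by (simp add: K_def)
  define C where "C k x = (\<Sum>e\<in>{e\<in>M. e v = k}. c e * (\<Prod>u\<in>V. x u ^ e u))" for k x
  have split: "(\<Sum>e\<in>M. c e * (\<Prod>u\<in>insert v V. y u ^ e u)) = (\<Sum>k\<in>K. C k y * y v ^ k)" for y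
  proof -
    have "(\<Sum>e\<in>M. c e * (\<Prod>u\<in>insert v V. y u ^ e u)) = (\<Sum>e\<in>M. c e * (\<Prod>u\<in>V. y u ^ e u) * y v ^ e v)"
      using insert.hyps by (simp add: algebra_simps)
    also have "\<dots> = (\<Sum>k\<in>K. \<Sum>e\<in>{e\<in>M. e v = k}. c e * (\<Prod>u\<in>V. y u ^ e u) * y v ^ e v)"
      unfolding K_def using fM by (rule sum.image_gen)
    also have "\<dots> = (\<Sum>k\<in>K. C k y * y v ^ k)"
      unfolding C_def by (simp add: sum_distrib_right)
    finally show ?thesis .
  qed
  have Czero: "C k x = 0" if kK: "k \<in> K" for k x
  proof -
    define P where "P = (\<Sum>j\<in>K. monom (C j x) j)"
    have "poly P t = 0" for t
    proof -
      have pv: "(\<Prod>u\<in>V. (x(v:=t)) u ^ e u) = (\<Prod>u\<in>V. x u ^ e u)" for e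
        by (rule prod.cong) (use insert.hyps in auto)
      have cc: "C j (x(v:=t)) = C j x" for j unfolding C_def using pv by simp
      have "poly P t = (\<Sum>j\<in>K. C j x * t ^ j)"
        by (simp add: P_def poly_sum poly_monom)
      also have "\<dots> = (\<Sum>j\<in>K. C j (x(v:=t)) * (x(v:=t)) v ^ j)"
        using cc by simp
      also have "\<dots> = 0" using split[of "x(v:=t)"] insert.prems(2) by simp
      finally show ?thesis .
    qed
    then have allz: "{t. poly P t = 0} = UNIV" by auto
    have "P = 0"
    proof (rule ccontr)
      assume "P \<noteq> 0"
      then have "finite {t. poly P t = 0}" by (rule poly_roots_finite)
      with allz inf show False by simp
    qed
    then have "coeff P k = 0" by simp
    moreover have "coeff P k = C k x"
      using kK fK by (simp add: P_def coeff_sum coeff_monom)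
    ultimately show ?thesis by simp
  qed
  define k0 where "k0 = e0 v"
  have k0K: "k0 \<in> K" using insert.prems(3) by (simp add: K_def k0_def)
  have "(\<Sum>e\<in>{e\<in>{e\<in>M. e v = k0}. \<forall>u\<in>V. e u = e0 u}. c e) = 0"
    apply (rule insert.IH)
    using fM apply simp
    using Czero[OF k0K] apply (simp add: C_def)
    using insert.prems(3) k0_def by simp
  moreover have "{e\<in>{e\<in>M. e v = k0}. \<forall>u\<in>V. e u = e0 u} = {e\<in>M. \<forall>u\<in>insert v V. e u = e0 u}"
    by (auto simp: k0_def)
  ultimately show ?case by simp
qed



lemma peval_eq_zero:
  fixes p :: "('v \<Rightarrow>\<^sub>0 nat) \<Rightarrow>\<^sub>0 'a::idom"
  assumes inf: "infinite (UNIV::'a set)" and vz: "\<forall>x. peval x p = 0"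
  shows "p = 0"
proof (rule ccontr)
  assume "p \<noteq> 0"
  then obtain m0 where m0: "m0 \<in> Poly_Mapping.keys p"
    by (metis all_not_in_conv keys_eq_empty)
  define V where "V = \<Union> (Poly_Mapping.keys ` Poly_Mapping.keys p)"
  have fV: "finite V" by (simp add: V_def)
  define M where "M = Poly_Mapping.lookup ` Poly_Mapping.keys p"
  define c where "c e = Poly_Mapping.lookup p (Abs_poly_mapping e)" for e
  have inj: "inj_on Poly_Mapping.lookup (Poly_Mapping.keys p)"
    by (rule inj_onI, rule poly_mapping_eqI, simp)
  have "(\<Sum>e\<in>M. c e * (\<Prod>u\<in>V. x u ^ e u)) = 0" for x
  proof -
    have "(\<Sum>e\<in>M. c e * (\<Prod>u\<in>V. x u ^ e u))
       = (\<Sum>m\<in>Poly_Mapping.keys p. Poly_Mapping.lookup p m * (\<Prod>u\<in>V. x u ^ Poly_Mapping.lookup m u))"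
      unfolding M_def using inj by (simp add: sum.reindex c_def lookup_inverse)
    also have "\<dots> = peval x p"
      unfolding peval_def
    proof (rule sum.cong[OF refl])
      fix m assume m: "m \<in> Poly_Mapping.keys p"
      have "Poly_Mapping.keys m \<subseteq> V" using m by (auto simp: V_def)
      then have "mmono x m = (\<Prod>u\<in>V. x u ^ Poly_Mapping.lookup m u)" using fV by (rule mono_superset[rotated])
      then show "Poly_Mapping.lookup p m * (\<Prod>u\<in>V. x u ^ Poly_Mapping.lookup m u) = Poly_Mapping.lookup p m * mmono x m" by simp
    qed
    finally show ?thesis using vz by simp
  qed
  then have "(\<Sum>e\<in>{e\<in>M. \<forall>u\<in>V. e u = Poly_Mapping.lookup m0 u}. c e) = 0"
    using key_vanish[OF inf fV, of M c "Poly_Mapping.lookup m0"] m0 by (simp add: M_def)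
  moreover have "{e\<in>M. \<forall>u\<in>V. e u = Poly_Mapping.lookup m0 u} = {Poly_Mapping.lookup m0}"
  proof -
    have "e = Poly_Mapping.lookup m0" if eM: "e \<in> M" and agr: "\<forall>u\<in>V. e u = Poly_Mapping.lookup m0 u" for e
    proof
      fix u
      obtain m where m: "m \<in> Poly_Mapping.keys p" "e = Poly_Mapping.lookup m" using eM M_def by auto
      show "e u = Poly_Mapping.lookup m0 u"
      proof (cases "u \<in> V")
        case True then show ?thesis using agr by simp
      next
        case False
        then have "u \<notin> Poly_Mapping.keys m" "u \<notin> Poly_Mapping.keys m0" using m m0 V_def by auto
        then show ?thesis using m by (simp add: in_keys_iff)
      qed
    qed
    then show ?thesis using m0 by (auto simp: M_def)
  qed
  ultimately have "Poly_Mapping.lookup p m0 = 0" by (simp add: c_def lookup_inverse)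
  then show False using m0 by (simp add: in_keys_iff)
qed




lemma da_zero:
  assumes "d_algebra s" shows "s 0 x = 0"
proof -
  have "s (0+0) x = s 0 x + s 0 x" using assms unfolding d_algebra_def by blast
  then show ?thesis by simp
qed

lemma da_zero2:
  assumes "d_algebra s" shows "s c 0 = 0"
proof -
  have "s c (0+0) = s c 0 + s c 0" using assms unfolding d_algebra_def by blast
  then show ?thesis by simp
qed

lemma da_neg1:
  assumes "d_algebra s" shows "s (-1) x = - x"
proof -
  have "s (1 + -1) x = s 1 x + s (-1) x" using assms unfolding d_algebra_def by blast
  then have "0 = x + s (-1) x" using assms da_zero[OF assms] unfolding d_algebra_def by simp
  then show ?thesis by (simp add: eq_neg_iff_add_eq_0 add.commute)
qed

lemma da_mult:
  assumes "d_algebra s" shows "s (a*b) (x*y) = s a x * s b y"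
proof -
  have "s (a*b) (x*y) = s a (s b (x*y))" using assms unfolding d_algebra_def by metis
  also have "\<dots> = s a (x * s b y)" using assms unfolding d_algebra_def by metis
  also have "\<dots> = s a x * s b y" using assms unfolding d_algebra_def by metis
  finally show ?thesis .
qed

lemma da_add2: "d_algebra s \<Longrightarrow> s a (x + y) = s a x + s a y"
  unfolding d_algebra_def by blast
lemma da_add1: "d_algebra s \<Longrightarrow> s (a + b) x = s a x + s b x"
  unfolding d_algebra_def by blast
lemma da_one: "d_algebra s \<Longrightarrow> s 1 x = x"
  unfolding d_algebra_def by blast
lemma da_multL: "d_algebra s \<Longrightarrow> s a (x * y) = s a x * y"
  unfolding d_algebra_def by blast

section \<open>Noncommutative polynomials\<close>

definition wP :: "(xvar \<Rightarrow> 'b::ring_1) \<Rightarrow> xvar list \<Rightarrow> 'b" where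
  "wP \<sigma> w = prod_list (map \<sigma> w)"

lemma nc_eval_superset:
  assumes "d_algebra s" "finite K" "Poly_Mapping.keys f \<subseteq> K"
  shows "nc_eval s \<sigma> f = (\<Sum>w\<in>K. s (Poly_Mapping.lookup f w) (wP \<sigma> w))"
  unfolding nc_eval_def wP_def
  by (rule sum.mono_neutral_left) (use assms da_zero[OF assms(1)] in \<open>auto simp: in_keys_iff\<close>)

lemma nc_eval_add:
  assumes "d_algebra s"
  shows "nc_eval s \<sigma> (f + g) = nc_eval s \<sigma> f + nc_eval s \<sigma> g"
proof -
  let ?K = "Poly_Mapping.keys f \<union> Poly_Mapping.keys g"
  have "nc_eval s \<sigma> (f+g) = (\<Sum>w\<in>?K. s (Poly_Mapping.lookup (f+g) w) (wP \<sigma> w))"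
    by (rule nc_eval_superset[OF assms]) (auto dest: subsetD[OF keys_add])
  also have "\<dots> = (\<Sum>w\<in>?K. s (Poly_Mapping.lookup f w) (wP \<sigma> w)) + (\<Sum>w\<in>?K. s (Poly_Mapping.lookup g w) (wP \<sigma> w))"
    by (simp add: lookup_add da_add1[OF assms] sum.distrib)
  also have "\<dots> = nc_eval s \<sigma> f + nc_eval s \<sigma> g"
  proof -
    have "nc_eval s \<sigma> f = (\<Sum>w\<in>?K. s (Poly_Mapping.lookup f w) (wP \<sigma> w))"
      by (rule nc_eval_superset[OF assms]) auto
    moreover have "nc_eval s \<sigma> g = (\<Sum>w\<in>?K. s (Poly_Mapping.lookup g w) (wP \<sigma> w))"
      by (rule nc_eval_superset[OF assms]) auto
    ultimately show ?thesis by simp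
  qed
  finally show ?thesis .
qed

lemma nc_eval_zero [simp]: "nc_eval s \<sigma> 0 = 0"
  by (simp add: nc_eval_def)

lemma nc_eval_single:
  assumes "d_algebra s"
  shows "nc_eval s \<sigma> (Poly_Mapping.single w c) = s c (wP \<sigma> w)"
  using da_zero[OF assms] by (simp add: nc_eval_def wP_def)

lemma nc_eval_sum:
  assumes "d_algebra s"
  shows "nc_eval s \<sigma> (sum f I) = (\<Sum>i\<in>I. nc_eval s \<sigma> (f i))"
  by (induction I rule: infinite_finite_induct) (auto simp: nc_eval_add[OF assms])

lemma nc_eval_diff:
  assumes "d_algebra s"
  shows "nc_eval s \<sigma> (f - g) = nc_eval s \<sigma> f - nc_eval s \<sigma> g"
proof -
  have "nc_eval s \<sigma> f = nc_eval s \<sigma> ((f - g) + g)" by simp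
  also have "\<dots> = nc_eval s \<sigma> (f - g) + nc_eval s \<sigma> g" by (rule nc_eval_add[OF assms])
  finally show ?thesis by simp
qed

definition ncmult :: "'a::comm_ring_1 ncpoly \<Rightarrow> 'a ncpoly \<Rightarrow> 'a ncpoly" where
  "ncmult f g = (\<Sum>u\<in>Poly_Mapping.keys f. \<Sum>v\<in>Poly_Mapping.keys g.
      Poly_Mapping.single (u @ v) (Poly_Mapping.lookup f u * Poly_Mapping.lookup g v))"

lemma wP_append: "wP \<sigma> (u @ v) = wP \<sigma> u * wP \<sigma> v"
  by (simp add: wP_def)

lemma nc_eval_mult:
  assumes "d_algebra s"
  shows "nc_eval s \<sigma> (ncmult f g) = nc_eval s \<sigma> f * nc_eval s \<sigma> g"
proof -
  have "nc_eval s \<sigma> (ncmult f g) = (\<Sum>u\<in>Poly_Mapping.keys f. \<Sum>v\<in>Poly_Mapping.keys g.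
      s (Poly_Mapping.lookup f u) (wP \<sigma> u) * s (Poly_Mapping.lookup g v) (wP \<sigma> v))"
    by (simp add: ncmult_def nc_eval_sum[OF assms] nc_eval_single[OF assms] wP_append da_mult[OF assms])
  also have "\<dots> = nc_eval s \<sigma> f * nc_eval s \<sigma> g"
    by (simp add: nc_eval_def wP_def sum_product)
  finally show ?thesis .
qed

lemma nc_eval_transport:
  assumes add: "\<And>x y. \<Phi> (x + y) = \<Phi> x + \<Phi> y" and zero: "\<Phi> 0 = 0"
    and mult: "\<And>x y. \<Phi> (x * y) = \<Phi> x * \<Phi> y" and one: "\<Phi> 1 = 1"
    and sm: "\<And>c x. \<Phi> (s1 c x) = s2 c (\<Phi> x)"
  shows "\<Phi> (nc_eval s1 \<sigma> f) = nc_eval s2 (\<Phi> \<circ> \<sigma>) f"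
proof -
  have sumh: "\<Phi> (sum g I) = (\<Sum>i\<in>I. \<Phi> (g i))" for g and I :: "xvar list set"
    by (induction I rule: infinite_finite_induct) (auto simp: add zero)
  have prodh: "\<Phi> (prod_list (map \<sigma> w)) = prod_list (map (\<Phi> \<circ> \<sigma>) w)" for w
    by (induction w) (auto simp: one mult)
  show ?thesis unfolding nc_eval_def by (simp add: sumh sm prodh)
qed




definition mapM :: "('r \<Rightarrow> 's) \<Rightarrow> 'r mat2 \<Rightarrow> 's mat2" where
  "mapM h A = Mat2 (h (m11 A)) (h (m12 A)) (h (m21 A)) (h (m22 A))"

abbreviation EM :: "(cvar \<Rightarrow> 'a::comm_ring_1) \<Rightarrow> 'a cpoly mat2 \<Rightarrow> 'a mat2" where
  "EM x \<equiv> mapM (peval x)"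

lemma EM_add: "EM x (A + B) = EM x A + EM x B"
  by (simp add: mapM_def plus_mat2_def peval_add)
lemma EM_mult: "EM x (A * B) = EM x A * EM x B"
  by (simp add: mapM_def times_mat2_def peval_add peval_mult)
lemma EM_one: "EM x 1 = 1"
  by (simp add: mapM_def one_mat2_def)
lemma EM_zero: "EM x 0 = 0"
  by (simp add: mapM_def zero_mat2_def)
lemma EM_smul: "EM x (Rsmul c A) = mat2_scale c (EM x A)"
  by (simp add: mapM_def Rsmul_def mat2_scale_def peval_mult)

lemma pconst_mult: "pconst (a * b) = pconst a * pconst b"
  by (simp add: pconst_def mult_single)
lemma pconst_add: "pconst (a + b) = pconst a + pconst b"
  by (simp add: pconst_def single_add)
lemma pconst_one: "pconst 1 = 1"
  by (simp add: pconst_def)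

lemma d_algebra_Rsmul: "d_algebra (Rsmul :: 'a::comm_ring_1 \<Rightarrow> 'a cpoly mat2 \<Rightarrow> _)"
  unfolding d_algebra_def Rsmul_def mat2_scale_def
  by (auto simp: pconst_mult pconst_add pconst_one times_mat2_def plus_mat2_def algebra_simps)

lemma Rsmul_m [simp]:
  "m11 (Rsmul c A) = pconst c * m11 A" "m12 (Rsmul c A) = pconst c * m12 A"
  "m21 (Rsmul c A) = pconst c * m21 A" "m22 (Rsmul c A) = pconst c * m22 A"
  by (simp_all add: Rsmul_def mat2_scale_def)

lemma mat2_ops [simp]:
  "m11 (A + B) = m11 A + m11 B" "m12 (A + B) = m12 A + m12 B"
  "m21 (A + B) = m21 A + m21 B" "m22 (A + B) = m22 A + m22 B"
  "m11 (A - B) = m11 A - m11 B" "m12 (A - B) = m12 A - m12 B"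
  "m21 (A - B) = m21 A - m21 B" "m22 (A - B) = m22 A - m22 B"
  "m11 (- A) = - m11 A" "m12 (- A) = - m12 A" "m21 (- A) = - m21 A" "m22 (- A) = - m22 A"
  "m11 (A * B) = m11 A * m11 B + m12 A * m21 B" "m12 (A * B) = m11 A * m12 B + m12 A * m22 B"
  "m21 (A * B) = m21 A * m11 B + m22 A * m21 B" "m22 (A * B) = m21 A * m12 B + m22 A * m22 B"
  "m11 0 = 0" "m12 0 = 0" "m21 0 = 0" "m22 0 = 0"
  "m11 1 = 1" "m12 1 = 0" "m21 1 = 0" "m22 1 = 1"
  by (simp_all add: plus_mat2_def minus_mat2_def uminus_mat2_def times_mat2_def zero_mat2_def one_mat2_def)

lemma graded_Rsmul: "graded_algebra (Rsmul :: 'a::comm_ring_1 \<Rightarrow> 'a cpoly mat2 \<Rightarrow> _) diag2 offdiag2"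
proof -
  have dec: "\<exists>x0\<in>diag2. \<exists>x1\<in>offdiag2. x = x0 + x1" for x :: "'a cpoly mat2"
    by (rule bexI[of _ "Mat2 (m11 x) 0 0 (m22 x)"], rule bexI[of _ "Mat2 0 (m12 x) (m21 x) 0"])
       (auto simp: diag2_def offdiag2_def intro: mat2.expand)
  have int: "diag2 \<inter> offdiag2 = {0 :: 'a cpoly mat2}"
    by (auto simp: diag2_def offdiag2_def intro: mat2.expand)
  show ?thesis
    unfolding graded_algebra_def d_submodule_def
    using d_algebra_Rsmul dec int by (auto simp: diag2_def offdiag2_def)
qed

lemma genS_sl2: "x \<in> genS \<Longrightarrow> x \<in> sl2"
proof (induction rule: genS.induct)
  case (smul x c)
  then have "m11 x + m22 x = 0" by (simp add: sl2_def)
  then have "pconst c * (m11 x + m22 x) = 0" by simp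
  then show ?case by (simp add: sl2_def distrib_left)
qed (auto simp: sl2_def genY_def genZ_def algebra_simps)

lemma Rsmul_neg1: "Rsmul (-1) x = - (x :: 'a::comm_ring_1 cpoly mat2)"
  by (rule da_neg1[OF d_algebra_Rsmul])

lemma genS_genR: "x \<in> genS \<Longrightarrow> x \<in> genR"
proof (induction rule: genS.induct)
  case (bracket x y)
  have "x * y - y * x = x * y + Rsmul (-1) (y * x)" by (simp add: Rsmul_neg1)
  then show ?case using bracket by (metis genR.add genR.mult genR.smul)
qed (auto intro: genR.intros)




lemma EM_transport:
  "EM x (nc_eval Rsmul \<sigma> f) = nc_eval mat2_scale (EM x \<circ> \<sigma>) f"
  by (rule nc_eval_transport) (simp_all add: EM_add EM_mult EM_one EM_zero EM_smul)

lemma EM_diag: "A \<in> sl2 \<inter> diag2 \<Longrightarrow> EM x A \<in> sl2 \<inter> diag2"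
proof -
  assume "A \<in> sl2 \<inter> diag2"
  then have "m11 A + m22 A = 0" "m12 A = 0" "m21 A = 0" by (auto simp: sl2_def diag2_def)
  then show ?thesis
    by (simp add: sl2_def diag2_def mapM_def peval_add[symmetric])
qed

lemma EM_off: "A \<in> sl2 \<inter> offdiag2 \<Longrightarrow> EM x A \<in> sl2 \<inter> offdiag2"
proof -
  assume "A \<in> sl2 \<inter> offdiag2"
  then have "m11 A = 0" "m22 A = 0" by (auto simp: sl2_def offdiag2_def)
  then show ?thesis
    by (simp add: sl2_def offdiag2_def mapM_def)
qed

lemma part1:
  assumes inf: "infinite (UNIV :: 'a::idom set)"
  shows "weak_ids (mat2_scale :: 'a \<Rightarrow> 'a mat2 \<Rightarrow> 'a mat2) (sl2 \<inter> diag2) (sl2 \<inter> offdiag2)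
           \<subseteq> weak_ids (Rsmul :: 'a \<Rightarrow> 'a cpoly mat2 \<Rightarrow> 'a cpoly mat2)
                (genS \<inter> genR0) (genS \<inter> genR1)"
proof
  fix f assume f: "f \<in> weak_ids (mat2_scale :: 'a \<Rightarrow> 'a mat2 \<Rightarrow> 'a mat2) (sl2 \<inter> diag2) (sl2 \<inter> offdiag2)"
  show "f \<in> weak_ids (Rsmul :: 'a \<Rightarrow> 'a cpoly mat2 \<Rightarrow> 'a cpoly mat2) (genS \<inter> genR0) (genS \<inter> genR1)"
    unfolding weak_ids_def
  proof (intro CollectI allI impI)
    fix \<sigma> :: "xvar \<Rightarrow> 'a cpoly mat2"
    assume \<sigma>: "(\<forall>i. \<sigma> (Yv i) \<in> genS \<inter> genR0) \<and> (\<forall>i. \<sigma> (Zv i) \<in> genS \<inter> genR1)"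
    define N where "N = nc_eval Rsmul \<sigma> f"
    have EN: "EM x N = 0" for x
    proof -
      have "EM x N = nc_eval mat2_scale (EM x \<circ> \<sigma>) f" unfolding N_def by (rule EM_transport)
      also have "\<dots> = 0"
      proof -
        have "(\<forall>i. (EM x \<circ> \<sigma>) (Yv i) \<in> sl2 \<inter> diag2) \<and> (\<forall>i. (EM x \<circ> \<sigma>) (Zv i) \<in> sl2 \<inter> offdiag2)"
        proof -
          have y: "\<sigma> (Yv i) \<in> sl2 \<inter> diag2" for i using \<sigma> genS_sl2 by (auto simp: genR0_def)
          have z: "\<sigma> (Zv i) \<in> sl2 \<inter> offdiag2" for i using \<sigma> genS_sl2 by (auto simp: genR1_def)
          show ?thesis using EM_diag[OF y] EM_off[OF z] by simp
        qed
        then show ?thesis using f unfolding weak_ids_def by blast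
      qed
      finally show ?thesis .
    qed
    have "m11 N = 0" "m12 N = 0" "m21 N = 0" "m22 N = 0"
      by (rule peval_eq_zero[OF inf], use EN in \<open>auto simp: mapM_def zero_mat2_def\<close>)+
    then show "nc_eval Rsmul \<sigma> f = 0"
      unfolding N_def[symmetric] by (simp add: zero_mat2_def mat2.expand)
  qed
qed




section \<open>Generic graded algebra facts\<close>

lemma sub_neg: "d_algebra s \<Longrightarrow> d_submodule s M \<Longrightarrow> x \<in> M \<Longrightarrow> - x \<in> M"
  by (metis d_submodule_def da_neg1)

lemma sub_add: "d_submodule s M \<Longrightarrow> x \<in> M \<Longrightarrow> y \<in> M \<Longrightarrow> x + y \<in> M"
  by (simp add: d_submodule_def)

lemma sub_smul: "d_submodule s M \<Longrightarrow> x \<in> M \<Longrightarrow> s c x \<in> M"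
  by (simp add: d_submodule_def)

lemma sub_zero: "d_submodule s M \<Longrightarrow> 0 \<in> M"
  by (simp add: d_submodule_def)

lemma sub_diff: "d_algebra s \<Longrightarrow> d_submodule s M \<Longrightarrow> x \<in> M \<Longrightarrow> y \<in> M \<Longrightarrow> x - y \<in> M"
  by (metis diff_conv_add_uminus sub_add sub_neg)

lemma sub_sum: "d_submodule s M \<Longrightarrow> (\<And>i. i \<in> I \<Longrightarrow> g i \<in> M) \<Longrightarrow> sum g I \<in> M"
  by (induction I rule: infinite_finite_induct) (auto intro: sub_add sub_zero)

lemma ga_one:
  assumes ga: "graded_algebra s A0 A1" shows "1 \<in> A0"
proof -
  have da: "d_algebra s" and s0: "d_submodule s A0" and s1: "d_submodule s A1"
    and int: "A0 \<inter> A1 = {0}"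
    and m00: "\<And>x y. x \<in> A0 \<Longrightarrow> y \<in> A0 \<Longrightarrow> x * y \<in> A0"
    and m01: "\<And>x y. x \<in> A0 \<Longrightarrow> y \<in> A1 \<Longrightarrow> x * y \<in> A1"
    and m11: "\<And>x y. x \<in> A1 \<Longrightarrow> y \<in> A1 \<Longrightarrow> x * y \<in> A0"
    using ga unfolding graded_algebra_def by blast+
  obtain e0 e1 where e0: "e0 \<in> A0" and e1: "e1 \<in> A1" and dec: "1 = e0 + e1"
    using ga unfolding graded_algebra_def by blast
  have "e0 = e0 * e0 + e0 * e1" by (metis dec distrib_left mult_1_right)
  then have "e0 * e1 = e0 - e0 * e0" by (simp add: algebra_simps)
  then have "e0 * e1 \<in> A0" using sub_diff[OF da s0] e0 m00 by simp
  moreover have "e0 * e1 \<in> A1" using m01 e0 e1 by simp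
  ultimately have z: "e0 * e1 = 0" using int by blast
  have "e1 = e0 * e1 + e1 * e1" by (metis dec distrib_right mult_1_left)
  then have "e1 = e1 * e1" using z by simp
  then have "e1 \<in> A0" using m11 e1 by metis
  then have "e1 = 0" using int e1 by blast
  then show ?thesis using dec e0 by simp
qed

fun isZ :: "xvar \<Rightarrow> bool" where
  "isZ (Zv i) = True" | "isZ (Yv i) = False"

definition zc :: "xvar list \<Rightarrow> nat" where
  "zc w = length (filter isZ w)"

lemma wP_graded:
  assumes ga: "graded_algebra s A0 A1"
    and sy: "\<And>i. \<sigma> (Yv i) \<in> A0" and sz: "\<And>i. \<sigma> (Zv i) \<in> A1"
  shows "wP \<sigma> w \<in> (if even (zc w) then A0 else A1)"
proof (induction w)
  case Nil
  then show ?case using ga_one[OF ga] by (simp add: wP_def zc_def)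
next
  case (Cons v w)
  have m00: "\<And>x y. x \<in> A0 \<Longrightarrow> y \<in> A0 \<Longrightarrow> x * y \<in> A0"
    and m01: "\<And>x y. x \<in> A0 \<Longrightarrow> y \<in> A1 \<Longrightarrow> x * y \<in> A1"
    and m10: "\<And>x y. x \<in> A1 \<Longrightarrow> y \<in> A0 \<Longrightarrow> x * y \<in> A1"
    and m11: "\<And>x y. x \<in> A1 \<Longrightarrow> y \<in> A1 \<Longrightarrow> x * y \<in> A0"
    using ga unfolding graded_algebra_def by blast+
  have wc: "wP \<sigma> (v # w) = \<sigma> v * wP \<sigma> w" by (simp add: wP_def)
  show ?case
  proof (cases v)
    case (Yv i)
    then show ?thesis using Cons sy[of i] m00 m01 wc by (auto simp: zc_def split: if_splits)
  next
    case (Zv i)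
    then show ?thesis using Cons sz[of i] m10 m11 wc by (auto simp: zc_def split: if_splits)
  qed
qed

definition fpart :: "(xvar list \<Rightarrow> bool) \<Rightarrow> 'a::comm_ring_1 ncpoly \<Rightarrow> 'a ncpoly" where
  "fpart P f = (\<Sum>w\<in>Poly_Mapping.keys f. if P w then Poly_Mapping.single w (Poly_Mapping.lookup f w) else 0)"

lemma fpart_split: "f = fpart P f + fpart (\<lambda>w. \<not> P w) f"
proof -
  have "fpart P f + fpart (\<lambda>w. \<not> P w) f = (\<Sum>w\<in>Poly_Mapping.keys f. Poly_Mapping.single w (Poly_Mapping.lookup f w))"
    unfolding fpart_def sum.distrib[symmetric] by (rule sum.cong) auto
  then show ?thesis using pm_repr[of f] by simp
qed

lemma nc_eval_fpart:
  assumes da: "d_algebra s"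
  shows "nc_eval s \<sigma> (fpart P f) = (\<Sum>w\<in>Poly_Mapping.keys f. if P w then s (Poly_Mapping.lookup f w) (wP \<sigma> w) else 0)"
  unfolding fpart_def nc_eval_sum[OF da] by (rule sum.cong) (auto simp: nc_eval_single[OF da])

lemma fpart_graded:
  assumes ga: "graded_algebra s A0 A1"
    and sy: "\<And>i. \<sigma> (Yv i) \<in> A0" and sz: "\<And>i. \<sigma> (Zv i) \<in> A1"
  shows "nc_eval s \<sigma> (fpart (\<lambda>w. even (zc w)) f) \<in> A0"
    and "nc_eval s \<sigma> (fpart (\<lambda>w. \<not> even (zc w)) f) \<in> A1"
proof -
  have da: "d_algebra s" and s0: "d_submodule s A0" and s1: "d_submodule s A1"
    using ga unfolding graded_algebra_def by blast+
  have w0: "even (zc w) \<Longrightarrow> wP \<sigma> w \<in> A0" for w using wP_graded[OF ga sy sz, of w] by simp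
  have w1: "\<not> even (zc w) \<Longrightarrow> wP \<sigma> w \<in> A1" for w using wP_graded[OF ga sy sz, of w] by simp
  show "nc_eval s \<sigma> (fpart (\<lambda>w. even (zc w)) f) \<in> A0"
    unfolding nc_eval_fpart[OF da]
    by (rule sub_sum[OF s0]) (auto intro: sub_smul[OF s0 w0] sub_zero[OF s0])
  show "nc_eval s \<sigma> (fpart (\<lambda>w. \<not> even (zc w)) f) \<in> A1"
    unfolding nc_eval_fpart[OF da]
    by (rule sub_sum[OF s1]) (auto intro: sub_smul[OF s1 w1] sub_zero[OF s1])
qed




definition genV :: "xvar \<Rightarrow> 'a::comm_ring_1 cpoly mat2" where
  "genV v = (case v of Yv i \<Rightarrow> genY i | Zv i \<Rightarrow> genZ i)"

definition abV :: "(nat \<Rightarrow> 'b) \<Rightarrow> (nat \<Rightarrow> 'b) \<Rightarrow> xvar \<Rightarrow> 'b" where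
  "abV a b v = (case v of Yv i \<Rightarrow> a i | Zv i \<Rightarrow> b i)"

lemma nc_eval_smul_poly:
  assumes da: "d_algebra s"
  shows "nc_eval s \<sigma> (ncmult (Poly_Mapping.single [] c) f) = s c (nc_eval s \<sigma> f)"
proof -
  have "nc_eval s \<sigma> (ncmult (Poly_Mapping.single [] c) f) = s c 1 * nc_eval s \<sigma> f"
    by (simp add: nc_eval_mult[OF da] nc_eval_single[OF da] wP_def)
  also have "\<dots> = s c (1 * nc_eval s \<sigma> f)" by (rule da_multL[OF da, symmetric])
  finally show ?thesis by simp
qed

lemma nc_eval_var:
  assumes da: "d_algebra s"
  shows "nc_eval s \<sigma> (Poly_Mapping.single [v] 1) = \<sigma> v"
  by (simp add: nc_eval_single[OF da] wP_def da_one[OF da])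

lemma nc_eval_1:
  assumes da: "d_algebra s"
  shows "nc_eval s \<sigma> (Poly_Mapping.single [] 1) = 1"
  by (simp add: nc_eval_single[OF da] wP_def da_one[OF da])

lemma genR_range: "x \<in> genR \<Longrightarrow> \<exists>f. x = nc_eval Rsmul genV f"
proof (induction rule: genR.induct)
  case one
  show ?case using nc_eval_1[OF d_algebra_Rsmul] by metis
next
  case (Y i)
  show ?case using nc_eval_var[OF d_algebra_Rsmul, of genV "Yv i"] by (metis genV_def xvar.simps(5))
next
  case (Z i)
  show ?case using nc_eval_var[OF d_algebra_Rsmul, of genV "Zv i"] by (metis genV_def xvar.simps(6))
next
  case (add x y)
  then show ?case using nc_eval_add[OF d_algebra_Rsmul] by metis
next
  case (mult x y)
  then show ?case using nc_eval_mult[OF d_algebra_Rsmul] by metis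
next
  case (smul x c)
  then show ?case using nc_eval_smul_poly[OF d_algebra_Rsmul] by metis
qed

lemma gen_wid:
  assumes z: "nc_eval Rsmul genV f = (0 :: 'a::comm_ring_1 cpoly mat2)"
  shows "f \<in> weak_ids (mat2_scale :: 'a \<Rightarrow> 'a mat2 \<Rightarrow> 'a mat2) (sl2 \<inter> diag2) (sl2 \<inter> offdiag2)"
  unfolding weak_ids_def
proof (intro CollectI allI impI)
  fix \<tau> :: "xvar \<Rightarrow> 'a mat2"
  assume \<tau>: "(\<forall>i. \<tau> (Yv i) \<in> sl2 \<inter> diag2) \<and> (\<forall>i. \<tau> (Zv i) \<in> sl2 \<inter> offdiag2)"
  define x where "x v = (case v of Alpha i \<Rightarrow> m11 (\<tau> (Yv i)) | Beta i \<Rightarrow> m12 (\<tau> (Zv i))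
      | Gamma i \<Rightarrow> m21 (\<tau> (Zv i)))" for v
  have eq: "EM x \<circ> genV = \<tau>"
  proof
    fix v show "(EM x \<circ> genV) v = \<tau> v"
    proof (cases v)
      case (Yv i)
      have "m12 (\<tau> (Yv i)) = 0" "m21 (\<tau> (Yv i)) = 0" "m22 (\<tau> (Yv i)) = - m11 (\<tau> (Yv i))"
        using \<tau> by (auto simp: sl2_def diag2_def eq_neg_iff_add_eq_0 add.commute)
      then show ?thesis using Yv
        by (auto simp: genV_def genY_def mapM_def x_def peval_uminus intro: mat2.expand)
    next
      case (Zv i)
      have "m11 (\<tau> (Zv i)) = 0" "m22 (\<tau> (Zv i)) = 0"
        using \<tau> by (auto simp: offdiag2_def)
      then show ?thesis using Zv
        by (auto simp: genV_def genZ_def mapM_def x_def intro: mat2.expand)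
    qed
  qed
  have "nc_eval mat2_scale \<tau> f = EM x (nc_eval Rsmul genV f)"
    using EM_transport[of x genV f] eq by simp
  also have "\<dots> = 0" using z EM_zero by simp
  finally show "nc_eval mat2_scale \<tau> f = 0" .
qed




lemma part2:
  fixes smul :: "'a::comm_ring_1 \<Rightarrow> 'b::ring_1 \<Rightarrow> 'b"
  assumes gp: "graded_pair smul A0 A1 L"
    and hid: "weak_ids (mat2_scale :: 'a \<Rightarrow> 'a mat2 \<Rightarrow> 'a mat2) (sl2 \<inter> diag2) (sl2 \<inter> offdiag2)
             \<subseteq> weak_ids smul (L \<inter> A0) (L \<inter> A1)"
    and ha: "\<forall>i. a i \<in> L \<inter> A0" and hb: "\<forall>i. b i \<in> L \<inter> A1"
  shows "\<exists>\<psi>. graded_hom_R smul A0 A1 \<psi> \<and> (\<forall>i. \<psi> (genY i) = a i) \<and> (\<forall>i. \<psi> (genZ i) = b i) \<and>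
               \<psi> ` genS \<subseteq> L \<and>
               (\<forall>\<phi>. graded_hom_R smul A0 A1 \<phi> \<and> (\<forall>i. \<phi> (genY i) = a i) \<and> (\<forall>i. \<phi> (genZ i) = b i)
                    \<longrightarrow> (\<forall>x\<in>genR. \<phi> x = \<psi> x))"
proof -
  have ga: "graded_algebra smul A0 A1" and sL: "d_submodule smul L"
    and brL: "\<And>x y. x \<in> L \<Longrightarrow> y \<in> L \<Longrightarrow> x * y - y * x \<in> L"
    using gp unfolding graded_pair_def by blast+
  have da: "d_algebra smul" using ga unfolding graded_algebra_def by blast
  have daR: "d_algebra (Rsmul :: 'a \<Rightarrow> 'a cpoly mat2 \<Rightarrow> _)" by (rule d_algebra_Rsmul)
  define ab where "ab = abV a b"
  have abY: "ab (Yv i) \<in> L \<inter> A0" for i using ha by (simp add: ab_def abV_def)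
  have abZ: "ab (Zv i) \<in> L \<inter> A1" for i using hb by (simp add: ab_def abV_def)
  have wd: "nc_eval smul ab f = nc_eval smul ab g"
    if "nc_eval Rsmul genV f = (nc_eval Rsmul genV g :: 'a cpoly mat2)" for f g
  proof -
    have "nc_eval Rsmul genV (f - g) = (0 :: 'a cpoly mat2)"
      using that by (simp add: nc_eval_diff[OF daR])
    then have "f - g \<in> weak_ids smul (L \<inter> A0) (L \<inter> A1)" using gen_wid hid by blast
    then have "nc_eval smul ab (f - g) = 0" using abY abZ unfolding weak_ids_def by blast
    then show ?thesis by (simp add: nc_eval_diff[OF da])
  qed
  define \<psi> where "\<psi> x = (THE y. \<exists>f. x = nc_eval Rsmul genV f \<and> y = nc_eval smul ab f)" for x
  have psi_eq: "\<psi> (nc_eval Rsmul genV f) = nc_eval smul ab f" for f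
    unfolding \<psi>_def
  proof (rule the_equality)
    show "\<exists>g. nc_eval Rsmul genV f = nc_eval Rsmul genV g \<and> nc_eval smul ab f = nc_eval smul ab g" by blast
  next
    fix y assume "\<exists>g. nc_eval Rsmul genV f = nc_eval Rsmul genV g \<and> y = nc_eval smul ab g"
    then show "y = nc_eval smul ab f" using wd by metis
  qed
  have ev_add: "\<And>f g. nc_eval Rsmul genV f + nc_eval Rsmul genV g = (nc_eval Rsmul genV (f + g) :: 'a cpoly mat2)"
    by (simp add: nc_eval_add[OF daR])
  have ev_mult: "\<And>f g. nc_eval Rsmul genV f * nc_eval Rsmul genV g = (nc_eval Rsmul genV (ncmult f g) :: 'a cpoly mat2)"
    by (simp add: nc_eval_mult[OF daR])
  have ev_smul: "\<And>f c. Rsmul c (nc_eval Rsmul genV f) = (nc_eval Rsmul genV (ncmult (Poly_Mapping.single [] c) f) :: 'a cpoly mat2)"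
    by (simp add: nc_eval_smul_poly[OF daR])
  have psi_add: "\<psi> (x + y) = \<psi> x + \<psi> y" if xr: "x \<in> genR" and yr: "y \<in> genR" for x y
  proof -
    obtain f where f: "x = nc_eval Rsmul genV f" using genR_range[OF xr] by blast
    obtain g where g: "y = nc_eval Rsmul genV g" using genR_range[OF yr] by blast
    have "\<psi> (x + y) = \<psi> (nc_eval Rsmul genV (f + g))" unfolding f g ev_add ..
    also have "\<dots> = nc_eval smul ab f + nc_eval smul ab g" unfolding psi_eq by (rule nc_eval_add[OF da])
    finally show ?thesis unfolding f g psi_eq .
  qed
  have psi_mult: "\<psi> (x * y) = \<psi> x * \<psi> y" if xr: "x \<in> genR" and yr: "y \<in> genR" for x y
  proof -
    obtain f where f: "x = nc_eval Rsmul genV f" using genR_range[OF xr] by blast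
    obtain g where g: "y = nc_eval Rsmul genV g" using genR_range[OF yr] by blast
    have "\<psi> (x * y) = \<psi> (nc_eval Rsmul genV (ncmult f g))" unfolding f g ev_mult ..
    also have "\<dots> = nc_eval smul ab f * nc_eval smul ab g" unfolding psi_eq by (rule nc_eval_mult[OF da])
    finally show ?thesis unfolding f g psi_eq .
  qed
  have psi_smul: "\<psi> (Rsmul c x) = smul c (\<psi> x)" if xr: "x \<in> genR" for x c
  proof -
    obtain f where f: "x = nc_eval Rsmul genV f" using genR_range[OF xr] by blast
    have "\<psi> (Rsmul c x) = \<psi> (nc_eval Rsmul genV (ncmult (Poly_Mapping.single [] c) f))" unfolding f ev_smul ..
    also have "\<dots> = smul c (nc_eval smul ab f)" unfolding psi_eq by (rule nc_eval_smul_poly[OF da])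
    finally show ?thesis unfolding f psi_eq .
  qed
  have psi_one: "\<psi> 1 = 1"
    using psi_eq[of "Poly_Mapping.single [] 1"] by (simp add: nc_eval_1[OF daR] nc_eval_1[OF da])
  have psi_Y: "\<psi> (genY i) = a i" for i
    using psi_eq[of "Poly_Mapping.single [Yv i] 1"]
    by (simp add: nc_eval_var[OF daR] nc_eval_var[OF da] genV_def ab_def abV_def)
  have psi_Z: "\<psi> (genZ i) = b i" for i
    using psi_eq[of "Poly_Mapping.single [Zv i] 1"]
    by (simp add: nc_eval_var[OF daR] nc_eval_var[OF da] genV_def ab_def abV_def)
  have gR: "graded_algebra (Rsmul :: 'a \<Rightarrow> 'a cpoly mat2 \<Rightarrow> _) diag2 offdiag2" by (rule graded_Rsmul)
  have gVY: "genV (Yv i) \<in> (diag2 :: 'a cpoly mat2 set)" for i by (simp add: genV_def genY_def diag2_def)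
  have gVZ: "genV (Zv i) \<in> (offdiag2 :: 'a cpoly mat2 set)" for i by (simp add: genV_def genZ_def offdiag2_def)
  have abY0: "ab (Yv i) \<in> A0" for i using abY by blast
  have abZ1: "ab (Zv i) \<in> A1" for i using abZ by blast
  have sdiag: "d_submodule Rsmul (diag2 :: 'a cpoly mat2 set)" and soff: "d_submodule Rsmul (offdiag2 :: 'a cpoly mat2 set)"
    and intR: "diag2 \<inter> offdiag2 = {0 :: 'a cpoly mat2}"
    using gR unfolding graded_algebra_def by blast+
  let ?E = "\<lambda>w. even (zc w)" let ?O = "\<lambda>w. \<not> even (zc w)"
  have grad0: "\<psi> x \<in> A0" if xr0: "x \<in> genR0" for x
  proof -
    obtain f where f: "x = nc_eval Rsmul genV f" using genR_range xr0 unfolding genR0_def by blast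
    have xd: "x \<in> diag2" using xr0 by (simp add: genR0_def)
    let ?e = "nc_eval Rsmul genV (fpart ?E f) :: 'a cpoly mat2"
    let ?o = "nc_eval Rsmul genV (fpart ?O f) :: 'a cpoly mat2"
    have xeo: "x = ?e + ?o" using f fpart_split[of f ?E] by (metis nc_eval_add[OF daR])
    have ed: "?e \<in> diag2" and oo: "?o \<in> offdiag2" using fpart_graded[OF gR gVY gVZ] by blast+
    have "?o = x - ?e" using xeo by simp
    then have "?o \<in> diag2" using sub_diff[OF daR sdiag xd ed] by simp
    then have "?o = 0" using oo intR by blast
    then have "x = ?e" using xeo by simp
    then have "\<psi> x = nc_eval smul ab (fpart ?E f)" using psi_eq by simp
    then show ?thesis using fpart_graded(1)[OF ga abY0 abZ1] by simp
  qed
  have grad1: "\<psi> x \<in> A1" if xr1: "x \<in> genR1" for x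
  proof -
    obtain f where f: "x = nc_eval Rsmul genV f" using genR_range xr1 unfolding genR1_def by blast
    have xd: "x \<in> offdiag2" using xr1 by (simp add: genR1_def)
    let ?e = "nc_eval Rsmul genV (fpart ?E f) :: 'a cpoly mat2"
    let ?o = "nc_eval Rsmul genV (fpart ?O f) :: 'a cpoly mat2"
    have xeo: "x = ?e + ?o" using f fpart_split[of f ?E] by (metis nc_eval_add[OF daR])
    have ed: "?e \<in> diag2" and oo: "?o \<in> offdiag2" using fpart_graded[OF gR gVY gVZ] by blast+
    have "?e = x - ?o" using xeo by simp
    then have "?e \<in> offdiag2" using sub_diff[OF daR soff xd oo] by simp
    then have "?e = 0" using ed intR by blast
    then have "x = ?o" using xeo by simp
    then have "\<psi> x = nc_eval smul ab (fpart ?O f)" using psi_eq by simp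
    then show ?thesis using fpart_graded(2)[OF ga abY0 abZ1] by simp
  qed
  have hom: "graded_hom_R smul A0 A1 \<psi>"
    unfolding graded_hom_R_def using psi_add psi_mult psi_smul psi_one grad0 grad1 by blast
  have psiS: "\<psi> x \<in> L" if "x \<in> genS" for x
    using that
  proof (induction rule: genS.induct)
    case (Y i) then show ?case using psi_Y ha by simp
  next
    case (Z i) then show ?case using psi_Z hb by simp
  next
    case (add x y)
    have "x \<in> genR" "y \<in> genR" using add.hyps genS_genR by auto
    then have "\<psi> (x + y) = \<psi> x + \<psi> y" by (rule psi_add)
    then show ?case using sub_add[OF sL add.IH] by simp
  next
    case (bracket x y)
    have xr: "x \<in> genR" and yr: "y \<in> genR" using bracket genS_genR by auto
    have e: "x * y - y * x = x * y + Rsmul (-1) (y * x)" by (simp add: Rsmul_neg1)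
    have xy: "x * y \<in> genR" and yx: "y * x \<in> genR" using xr yr by (auto intro: genR.mult)
    have "\<psi> (x * y - y * x) = \<psi> (x * y) + \<psi> (Rsmul (-1) (y * x))"
      unfolding e by (rule psi_add[OF xy genR.smul[OF yx]])
    then have "\<psi> (x * y - y * x) = \<psi> x * \<psi> y + smul (-1) (\<psi> y * \<psi> x)"
      using psi_mult[OF xr yr] psi_mult[OF yr xr] psi_smul[OF yx] by simp
    also have "\<dots> = \<psi> x * \<psi> y - \<psi> y * \<psi> x" by (simp add: da_neg1[OF da])
    finally show ?case using brL bracket by simp
  next
    case (smul x c)
    have "x \<in> genR" using smul.hyps genS_genR by auto
    then have "\<psi> (Rsmul c x) = smul c (\<psi> x)" by (rule psi_smul)
    then show ?case using sub_smul[OF sL smul.IH] by simp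
  qed
  have uniq: "\<forall>\<phi>. graded_hom_R smul A0 A1 \<phi> \<and> (\<forall>i. \<phi> (genY i) = a i) \<and> (\<forall>i. \<phi> (genZ i) = b i)
                    \<longrightarrow> (\<forall>x\<in>genR. \<phi> x = \<psi> x)"
  proof (intro allI impI ballI)
    fix \<phi> :: "'a cpoly mat2 \<Rightarrow> 'b" and x :: "'a cpoly mat2" assume h: "graded_hom_R smul A0 A1 \<phi> \<and> (\<forall>i. \<phi> (genY i) = a i) \<and> (\<forall>i. \<phi> (genZ i) = b i)"
      and x: "x \<in> genR"
    from x show "\<phi> x = \<psi> x"
    proof (induction rule: genR.induct)
      case one then show ?case using h psi_one unfolding graded_hom_R_def by simp
    next
      case (Y i) then show ?case using h psi_Y by simp
    next
      case (Z i) then show ?case using h psi_Z by simp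
    next
      case (add x y) then show ?case using h psi_add unfolding graded_hom_R_def by simp
    next
      case (mult x y) then show ?case using h psi_mult unfolding graded_hom_R_def by simp
    next
      case (smul x c) then show ?case using h psi_smul unfolding graded_hom_R_def by simp
    qed
  qed
  show ?thesis using hom psi_Y psi_Z psiS uniq by blast
qed

theorem mainTheorem1:
  fixes D_witness :: "'a::idom itself"
  assumes "infinite (UNIV :: 'a set)"
  shows "weak_ids (mat2_scale :: 'a \<Rightarrow> 'a mat2 \<Rightarrow> 'a mat2) (sl2 \<inter> diag2) (sl2 \<inter> offdiag2)
           \<subseteq> weak_ids (Rsmul :: 'a \<Rightarrow> 'a cpoly mat2 \<Rightarrow> 'a cpoly mat2)
                (genS \<inter> genR0) (genS \<inter> genR1)
         \<and> (\<forall>(smul :: 'a \<Rightarrow> 'b::ring_1 \<Rightarrow> 'b) A0 A1 L a b.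
           graded_pair smul A0 A1 L \<and>
           weak_ids (mat2_scale :: 'a \<Rightarrow> 'a mat2 \<Rightarrow> 'a mat2) (sl2 \<inter> diag2) (sl2 \<inter> offdiag2)
             \<subseteq> weak_ids smul (L \<inter> A0) (L \<inter> A1) \<and>
           (\<forall>i. a i \<in> L \<inter> A0) \<and> (\<forall>i. b i \<in> L \<inter> A1) \<longrightarrow>
           (\<exists>\<psi>. graded_hom_R smul A0 A1 \<psi> \<and> (\<forall>i. \<psi> (genY i) = a i) \<and> (\<forall>i. \<psi> (genZ i) = b i) \<and>
               \<psi> ` genS \<subseteq> L \<and>
               (\<forall>\<phi>. graded_hom_R smul A0 A1 \<phi> \<and> (\<forall>i. \<phi> (genY i) = a i) \<and> (\<forall>i. \<phi> (genZ i) = b i)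
                    \<longrightarrow> (\<forall>x\<in>genR. \<phi> x = \<psi> x))))"
  using part1[OF assms] part2 by blast


end
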